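(* Let $d\ge 1$, $\bm z\in\mathbb{R}^d$ and $\alpha\ge 1$, and let $\bm p^\star = \alpha\text{-entmax}(\bm z)$. Let $\mathcal S=\{i: p^\star_i>0\}$ be the support of $\bm p^\star$. Define, for $i\in\mathcal S$, $\tilde p_i = \dfrac{(p_i^\star)^{2-\alpha}}{\sum_{j\in\mathcal S}(p_j^\star)^{2-\alpha}}$ and $\tilde p_i=0$ for $i\notin\mathcal S$, and $h_i = -p_i^\star\log p_i^\star$ (with $0\log 0=0$). Then, at every $(\bm z,\alpha)$ at which $\alpha\mapsto \alpha\text{-entmax}(\bm z)$ is differentiable (for $\alpha=1$: the one-sided derivative from $\alpha\to1^+$), the $i$-th component of the Jacobian $\bm g = \partial\, \alpha\text{-entmax}(\bm z)/\partial\alpha$ is $$ g_i = \begin{cases} \dfrac{p_i^\star-\tilde p_i}{(\alpha-1)^2} + \dfrac{h_i - \tilde p_i\sum_j h_j}{\alpha-1}, & \alpha>1,\\[2ex] \dfrac{h_i\log p_i^\star - p_i^\star\sum_j h_j\log p_j^\star}{2}, & \alpha=1,\end{cases}$$ where in the $\alpha=1$ case $h_i\log p_i^\star=-p_i^\star\log^2 p_i^\star$, i.e. $g_i = \tfrac12\big(-p_i^\star\log^2p_i^\star + p_i^\star\sum_j p_j^\star\log^2 p_j^\star\big)$. In particular $g_i=0$ whenever $p_i^\star=0$.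
   Context: The probability simplex is $\triangle^d=\{\bm p\in\mathbb{R}^d: p_i\ge 0,\ \sum_i p_i=1\}$. For $\alpha\ge1$ the Tsallis entropy is $\mathsf H^{T}_\alpha(\bm p)=\frac{1}{\alpha(\alpha-1)}\sum_j (p_j-p_j^\alpha)$ for $\alpha\neq1$ and $\mathsf H^T_1(\bm p)=-\sum_j p_j\log p_j$ (Shannon entropy). The $\alpha$-entmax mapping is $\alpha\text{-entmax}(\bm z)=\arg\max_{\bm p\in\triangle^d}\ \bm p^\top\bm z+\mathsf H^T_\alpha(\bm p)$ (the maximizer is unique). For $\alpha=1$ it equals softmax; for $\alpha>1$ the solution has the form $p^\star_i=[(\alpha-1)(z_i-\tau^\star)]_+^{1/(\alpha-1)}$ for a unique scalar $\tau^\star$ ensuring $\sum_i p_i^\star=1$, where $[t]_+=\max(t,0)$. *)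

theory Defs
  imports "HOL-Analysis.Analysis"
begin

definition prob_simplex :: "('n::finite \<Rightarrow> real) set" where
  "prob_simplex = {p. (\<forall>i. p i \<ge> 0) \<and> (\<Sum>i\<in>UNIV. p i) = 1}"

text \<open>Tsallis entropy; for alpha = 1 the Shannon entropy. Note 0 * ln 0 = 0 in HOL,
  matching the convention 0 log 0 = 0.\<close>
definition tsallis :: "real \<Rightarrow> ('n::finite \<Rightarrow> real) \<Rightarrow> real" where
  "tsallis \<alpha> p = (if \<alpha> = 1 then - (\<Sum>j\<in>UNIV. p j * ln (p j))
                   else (1 / (\<alpha> * (\<alpha> - 1))) * (\<Sum>j\<in>UNIV. p j - p j powr \<alpha>))"

definition entmax :: "real \<Rightarrow> ('n::finite \<Rightarrow> real) \<Rightarrow> ('n \<Rightarrow> real)" where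
  "entmax \<alpha> z = (THE p. p \<in> prob_simplex \<and>
      (\<forall>q\<in>prob_simplex. (\<Sum>i\<in>UNIV. q i * z i) + tsallis \<alpha> q \<le> (\<Sum>i\<in>UNIV. p i * z i) + tsallis \<alpha> p))"

end

theory Submission
  imports Defs "HOL-Real_Asymp.Real_Asymp"
begin


definition obj :: "real \<Rightarrow> ('n::finite \<Rightarrow> real) \<Rightarrow> ('n \<Rightarrow> real) \<Rightarrow> real" where
  "obj a z q = (\<Sum>i\<in>UNIV. q i * z i) + tsallis a q"

lemma entmax_eqI:
  assumes "p \<in> prob_simplex" "\<And>q. q \<in> prob_simplex \<Longrightarrow> q \<noteq> p \<Longrightarrow> obj a z q < obj a z p"
  shows "entmax a z = p"
  unfolding entmax_def
proof (rule the_equality)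
  show "p \<in> prob_simplex \<and> (\<forall>q\<in>prob_simplex. (\<Sum>i\<in>UNIV. q i * z i) + tsallis a q \<le> (\<Sum>i\<in>UNIV. p i * z i) + tsallis a p)"
    using assms unfolding obj_def by (metis order.order_iff_strict)
next
  fix p' assume h: "p' \<in> prob_simplex \<and> (\<forall>q\<in>prob_simplex. (\<Sum>i\<in>UNIV. q i * z i) + tsallis a q \<le> (\<Sum>i\<in>UNIV. p' i * z i) + tsallis a p')"
  show "p' = p"
  proof (rule ccontr)
    assume "p' \<noteq> p"
    then have "obj a z p' < obj a z p" using assms h by blast
    moreover have "obj a z p \<le> obj a z p'" using h assms(1) unfolding obj_def by blast
    ultimately show False by simp
  qed
qed

lemma softmax_coord:
  fixes x q w :: real
  assumes "x \<ge> 0" "q > 0"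
  shows "x * (ln q + w) - x * ln x \<le> x * w + q - x"
    and "x \<noteq> q \<Longrightarrow> x * (ln q + w) - x * ln x < x * w + q - x"
proof -
  have main: "x * (ln q + w) - x * ln x \<le> x * w + q - x \<and> (x \<noteq> q \<longrightarrow> x * (ln q + w) - x * ln x < x * w + q - x)"
  proof (cases "x = 0")
    case True then show ?thesis using assms by simp
  next
    case False
    then have xp: "x > 0" using assms by simp
    have l: "ln (q / x) \<le> q / x - 1" using xp assms by (intro ln_le_minus_one) simp
    have e: "x \<noteq> q \<Longrightarrow> ln (q / x) \<noteq> q / x - 1"
      using ln_eq_minus_one[of "q/x"] xp assms by (auto simp: field_simps)
    have d: "ln (q / x) = ln q - ln x" using xp assms by (simp add: ln_div)
    have "x * ln (q/x) \<le> x * (q/x - 1)" using l xp by (simp add: mult_left_mono)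
    moreover have "x \<noteq> q \<Longrightarrow> x * ln (q/x) < x * (q/x - 1)" using l e xp by simp
    moreover have A: "x * ln (q/x) = x * ln q - x * ln x" by (simp add: d right_diff_distrib)
    moreover have B: "x * (q/x - 1) = q - x" using xp by (simp add: field_simps)
    moreover have C: "x * (ln q + w) = x * ln q + x * w" by (simp add: distrib_left)
    ultimately show ?thesis by linarith
  qed
  then show "x * (ln q + w) - x * ln x \<le> x * w + q - x" by blast
  show "x \<noteq> q \<Longrightarrow> x * (ln q + w) - x * ln x < x * w + q - x" using main by blast
qed

lemma entmax_one:
  fixes z :: "'n::finite \<Rightarrow> real"
  defines "Z \<equiv> (\<Sum>j\<in>UNIV. exp (z j))"
  shows "entmax 1 z = (\<lambda>i. exp (z i) / Z)"
proof -
  let ?q = "\<lambda>i. exp (z i) / Z"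
  have Zp: "Z > 0" unfolding Z_def by (intro sum_pos) auto
  have qp: "?q i > 0" for i using Zp by simp
  have lnq: "z i = ln (?q i) + ln Z" for i using Zp by (simp add: ln_div)
  have sq: "(\<Sum>i\<in>UNIV. ?q i) = 1" using Zp by (simp add: Z_def sum_divide_distrib[symmetric])
  have qs: "?q \<in> prob_simplex" unfolding prob_simplex_def using qp sq by (auto intro: less_imp_le)
  have objq: "obj 1 z ?q = ln Z"
  proof -
    have "obj 1 z ?q = (\<Sum>i\<in>UNIV. ?q i * z i - ?q i * ln (?q i))"
      unfolding obj_def tsallis_def by (simp add: sum_subtractf)
    also have "\<dots> = (\<Sum>i\<in>UNIV. ?q i * ln Z)"
    proof (rule sum.cong)
      fix i
      have "z i - ln (?q i) = ln Z" using lnq[of i] by linarith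
      then show "?q i * z i - ?q i * ln (?q i) = ?q i * ln Z" by (simp only: right_diff_distrib[symmetric])
    qed simp
    also have "\<dots> = (\<Sum>i\<in>UNIV. ?q i) * ln Z" by (rule sum_distrib_right[symmetric])
    also have "\<dots> = ln Z" using sq by simp
    finally show ?thesis .
  qed
  show ?thesis
  proof (rule entmax_eqI[OF qs])
    fix x assume xs: "x \<in> prob_simplex" and ne: "x \<noteq> ?q"
    have x0: "x i \<ge> 0" for i using xs by (simp add: prob_simplex_def)
    have sx: "(\<Sum>i\<in>UNIV. x i) = 1" using xs by (simp add: prob_simplex_def)
    obtain k where k: "x k \<noteq> ?q k" using ne by auto
    have "obj 1 z x = (\<Sum>i\<in>UNIV. x i * (ln (?q i) + ln Z) - x i * ln (x i))"
      unfolding obj_def tsallis_def by (simp add: sum_subtractf lnq[symmetric])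
    also have "\<dots> < (\<Sum>i\<in>UNIV. x i * ln Z + ?q i - x i)"
      apply (rule sum_strict_mono_ex1)
      using softmax_coord(1)[OF x0 qp] softmax_coord(2)[OF x0 qp k, of "ln Z"] by auto
    also have "\<dots> = ln Z" using sx sq by (simp add: sum.distrib sum_subtractf sum_distrib_right[symmetric])
    finally show "obj 1 z x < obj 1 z ?q" using objq by simp
  qed
qed



lemma tangent_strict:
  fixes a x y :: real
  assumes a: "a > 1" and y: "y > 0" and x: "x \<ge> 0" and ne: "x \<noteq> y"
  shows "a * y powr (a - 1) * (x - y) < x powr a - y powr a"
proof (cases "x = 0")
  case True
  have "y powr (a - 1) * y = y powr a" using y by (simp add: powr_diff)
  moreover have "y powr a > 0" using y by simp
  ultimately show ?thesis using True a
    by (simp add: algebra_simps)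
next
  case False
  then have xp: "x > 0" using x by simp
  have der: "DERIV (\<lambda>t. t powr a) t :> a * t powr (a - 1)" if "t > 0" for t
    using has_real_derivative_powr[OF that] .
  show ?thesis
  proof (cases "x < y")
    case True
    obtain c where c: "x < c" "c < y" "y powr a - x powr a = (y - x) * (a * c powr (a - 1))"
      using MVT2[OF True, of "\<lambda>t. t powr a" "\<lambda>t. a * t powr (a - 1)"] der xp by force
    have "c powr (a - 1) < y powr (a - 1)" using c xp a by (intro powr_less_mono2) auto
    then have "a * c powr (a - 1) * (y - x) < a * y powr (a - 1) * (y - x)" using True a by simp
    then show ?thesis using c(3) by (simp add: algebra_simps)
  next
    case False
    then have yx: "y < x" using ne by simp
    obtain c where c: "y < c" "c < x" "x powr a - y powr a = (x - y) * (a * c powr (a - 1))"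
      using MVT2[OF yx, of "\<lambda>t. t powr a" "\<lambda>t. a * t powr (a - 1)"] der y by force
    have "y powr (a - 1) < c powr (a - 1)" using c y a by (intro powr_less_mono2) auto
    then have "a * y powr (a - 1) * (x - y) < a * c powr (a - 1) * (x - y)" using yx a by simp
    then show ?thesis using c(3) by (simp add: algebra_simps)
  qed
qed



lemma psi_coord:
  fixes a w x k :: real
  assumes a: "a > 1" and x: "x \<ge> 0"
  defines "p \<equiv> (max 0 ((a - 1) * w)) powr (1 / (a - 1))"
  defines "\<kappa> \<equiv> 1 / (a * (a - 1))"
  shows "x * w - \<kappa> * x powr a \<le> p * w - \<kappa> * p powr a"
    and "x \<noteq> p \<Longrightarrow> x * w - \<kappa> * x powr a < p * w - \<kappa> * p powr a"
proof -
  have kp: "\<kappa> > 0" using a unfolding \<kappa>_def by simp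
  have main: "x * w - \<kappa> * x powr a \<le> p * w - \<kappa> * p powr a \<and> (x \<noteq> p \<longrightarrow> x * w - \<kappa> * x powr a < p * w - \<kappa> * p powr a)"
  proof (cases "w \<le> 0")
    case True
    then have "max 0 ((a - 1) * w) = 0" using a by (simp add: mult_nonneg_nonpos)
    then have p0: "p = 0" unfolding p_def by simp
    have "x * w \<le> 0" using True x by (simp add: mult_nonneg_nonpos)
    moreover have "x powr a \<ge> 0" by simp
    moreover have "x \<noteq> 0 \<Longrightarrow> x powr a > 0" using x by simp
    moreover have "\<kappa> * x powr a \<ge> 0" using kp by simp
    moreover have "x \<noteq> 0 \<Longrightarrow> \<kappa> * x powr a > 0" using kp x by simp
    moreover have "x * w \<le> 0" using True x by (simp add: mult_nonneg_nonpos)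
    ultimately show ?thesis using p0 by auto
  next
    case False
    define u where "u = (a - 1) * w"
    have up: "u > 0" using False a unfolding u_def by simp
    have pu: "p = u powr (1 / (a - 1))" unfolding p_def u_def using up u_def by simp
    have pp: "p > 0" using pu up by simp
    have ppow: "p powr (a - 1) = u" using pu up a by (simp add: powr_powr)
    have w: "w = \<kappa> * a * p powr (a - 1)" using a by (simp add: ppow u_def \<kappa>_def field_simps)
    have t: "x \<noteq> p \<Longrightarrow> a * p powr (a - 1) * (x - p) < x powr a - p powr a"
      using tangent_strict[OF a pp x] by blast
    have eq: "x * w - \<kappa> * x powr a - (p * w - \<kappa> * p powr a) = \<kappa> * (a * p powr (a - 1) * (x - p) - (x powr a - p powr a))"
      unfolding w by (simp add: algebra_simps)
    have "x \<noteq> p \<Longrightarrow> \<kappa> * (a * p powr (a - 1) * (x - p) - (x powr a - p powr a)) < 0"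
      using t kp by (simp add: mult_pos_neg)
    then show ?thesis using eq by (cases "x = p") auto
  qed
  then show "x * w - \<kappa> * x powr a \<le> p * w - \<kappa> * p powr a" by blast
  show "x \<noteq> p \<Longrightarrow> x * w - \<kappa> * x powr a < p * w - \<kappa> * p powr a" using main by blast
qed

lemma obj_gt1_aux:
  fixes z q :: "'n::finite \<Rightarrow> real"
  assumes a: "a > 1" and q: "q \<in> prob_simplex" and k: "\<kappa> = 1 / (a * (a - 1))"
  shows "obj a z q = (\<Sum>i\<in>UNIV. q i * (z i - \<tau>) - \<kappa> * q i powr a) + \<tau> + \<kappa>"
proof -
  have s: "(\<Sum>i\<in>UNIV. q i) = 1" using q by (simp add: prob_simplex_def)
  have "(\<Sum>i\<in>UNIV. q i * (z i - \<tau>) - \<kappa> * q i powr a)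
     = (\<Sum>i\<in>UNIV. q i * z i - \<tau> * q i - \<kappa> * q i powr a)"
    by (rule sum.cong) (auto simp: algebra_simps)
  also have "\<dots> = (\<Sum>i\<in>UNIV. q i * z i) - (\<Sum>i\<in>UNIV. \<tau> * q i) - (\<Sum>i\<in>UNIV. \<kappa> * q i powr a)"
    by (simp add: sum_subtractf)
  also have "\<dots> = (\<Sum>i\<in>UNIV. q i * z i) - \<tau> * (\<Sum>i\<in>UNIV. q i) - \<kappa> * (\<Sum>i\<in>UNIV. q i powr a)"
    by (simp add: sum_distrib_left)
  finally have 1: "(\<Sum>i\<in>UNIV. q i * (z i - \<tau>) - \<kappa> * q i powr a) = (\<Sum>i\<in>UNIV. q i * z i) - \<tau> - \<kappa> * (\<Sum>i\<in>UNIV. q i powr a)"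
    using s by simp
  have "obj a z q = (\<Sum>i\<in>UNIV. q i * z i) + \<kappa> * ((\<Sum>i\<in>UNIV. q i) - (\<Sum>i\<in>UNIV. q i powr a))"
    unfolding obj_def tsallis_def k using a by (simp add: sum_subtractf)
  then show ?thesis using s 1 by (simp add: algebra_simps)
qed

lemma obj_gt1:
  fixes z q :: "'n::finite \<Rightarrow> real"
  assumes a: "a > 1" and q: "q \<in> prob_simplex"
  shows "obj a z q = (\<Sum>i\<in>UNIV. q i * (z i - \<tau>) - 1 / (a * (a - 1)) * q i powr a) + \<tau> + 1 / (a * (a - 1))"
  using obj_gt1_aux[OF a q refl] .

lemma entmax_gt1:
  fixes z :: "'n::finite \<Rightarrow> real"
  assumes a: "a > 1"
  shows "\<exists>\<tau>. entmax a z = (\<lambda>i. (max 0 ((a - 1) * (z i - \<tau>))) powr (1 / (a - 1)))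
           \<and> entmax a z \<in> prob_simplex"
proof -
  define r where "r = 1 / (a - 1)"
  have rp: "r > 0" using a by (simp add: r_def)
  define f where "f = (\<lambda>t i. (max 0 ((a - 1) * (z i - t))) powr r)"
  define s where "s = (\<lambda>t. \<Sum>i\<in>UNIV. f t i)"
  have cont: "continuous_on A s" for A
    unfolding s_def f_def
  proof (intro continuous_on_sum)
    fix i
    show "continuous_on A (\<lambda>t. max 0 ((a - 1) * (z i - t)) powr r)"
      by (rule continuous_on_powr') (use rp in \<open>auto intro!: continuous_intros\<close>)
  qed
  define M where "M = Max (range z)"
  have zM: "z i \<le> M" for i unfolding M_def by simp
  obtain i0 where i0: "z i0 = M" unfolding M_def
    by (metis (mono_tags, lifting) Max_in UNIV_not_empty finite finite_imageI image_iff image_is_empty)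
  have "(a - 1) * (z i - M) \<le> 0" for i using zM[of i] a by (intro mult_nonneg_nonpos) auto
  then have sM: "s M = 0" unfolding s_def f_def
    by (intro sum.neutral) (simp add: max_absorb1)
  have "f (M - r) i0 = 1" unfolding f_def using i0 a by (simp add: r_def)
  moreover have "f (M - r) i0 \<le> sum (f (M - r)) UNIV" by (rule member_le_sum) (auto simp: f_def)
  ultimately have sMr: "s (M - r) \<ge> 1" unfolding s_def by linarith
  obtain \<tau> where \<tau>: "s \<tau> = 1" using IVT2'[of s M 1 "M - r", OF _ _ _ cont] sM sMr rp by auto
  define p where "p = f \<tau>"
  have ps: "p \<in> prob_simplex" unfolding prob_simplex_def p_def using \<tau> by (simp add: s_def f_def)
  have "entmax a z = p"
  proof (rule entmax_eqI[OF ps])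
    fix q assume qs: "q \<in> prob_simplex" and ne: "q \<noteq> p"
    have q0: "q i \<ge> 0" for i using qs by (simp add: prob_simplex_def)
    obtain k where k: "q k \<noteq> p k" using ne by auto
    have pe: "p i = (max 0 ((a - 1) * (z i - \<tau>))) powr (1 / (a - 1))" for i unfolding p_def f_def r_def ..
    have "(\<Sum>i\<in>UNIV. q i * (z i - \<tau>) - 1 / (a * (a - 1)) * q i powr a)
        < (\<Sum>i\<in>UNIV. p i * (z i - \<tau>) - 1 / (a * (a - 1)) * p i powr a)"
    proof (rule sum_strict_mono_ex1)
      show "\<forall>i\<in>UNIV. q i * (z i - \<tau>) - 1 / (a * (a - 1)) * q i powr a \<le> p i * (z i - \<tau>) - 1 / (a * (a - 1)) * p i powr a"
      proof
        fix i
        show "q i * (z i - \<tau>) - 1 / (a * (a - 1)) * q i powr a \<le> p i * (z i - \<tau>) - 1 / (a * (a - 1)) * p i powr a"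
          using psi_coord(1)[OF a q0[of i], of "z i - \<tau>"] unfolding pe[of i] .
      qed
      have "q k * (z k - \<tau>) - 1 / (a * (a - 1)) * q k powr a < p k * (z k - \<tau>) - 1 / (a * (a - 1)) * p k powr a"
        using psi_coord(2)[OF a q0[of k], of "z k - \<tau>"] k unfolding pe[of k] by blast
      then show "\<exists>i\<in>UNIV. q i * (z i - \<tau>) - 1 / (a * (a - 1)) * q i powr a < p i * (z i - \<tau>) - 1 / (a * (a - 1)) * p i powr a"
        by blast
    qed simp
    then show "obj a z q < obj a z p" using obj_gt1[OF a qs, of z \<tau>] obj_gt1[OF a ps, of z \<tau>] by simp
  qed
  then show ?thesis using ps unfolding p_def f_def r_def by auto
qed



lemma entmax_simplex:
  fixes z :: "'n::finite \<Rightarrow> real"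
  assumes "a \<ge> 1" shows "entmax a z \<in> prob_simplex"
proof (cases "a = 1")
  case True
  define Z where "Z = (\<Sum>j\<in>UNIV. exp (z j))"
  have Zp: "Z > 0" unfolding Z_def by (intro sum_pos) auto
  have "(\<Sum>i\<in>UNIV. exp (z i) / Z) = 1" using Zp by (simp add: Z_def sum_divide_distrib[symmetric])
  moreover have "exp (z i) / Z \<ge> 0" for i using Zp by simp
  ultimately have "(\<lambda>i. exp (z i) / Z) \<in> prob_simplex" unfolding prob_simplex_def by simp
  then show ?thesis using True entmax_one[of z] unfolding Z_def by simp
next
  case False
  then have "a > 1" using assms by simp
  from entmax_gt1[OF this, of z] show ?thesis by blast
qed

lemma entmax_nonneg: "a \<ge> 1 \<Longrightarrow> entmax a z i \<ge> 0"
  using entmax_simplex[of a z] by (simp add: prob_simplex_def)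

lemma entmax_sum: "a \<ge> 1 \<Longrightarrow> (\<Sum>i\<in>UNIV. entmax a z i) = 1"
  using entmax_simplex[of a z] by (simp add: prob_simplex_def)

lemma entmax_stat:
  fixes z :: "'n::finite \<Rightarrow> real"
  assumes a: "a > 1" and pi: "entmax a z i > 0" and pj: "entmax a z j > 0"
  shows "entmax a z i powr (a - 1) - entmax a z j powr (a - 1) = (a - 1) * (z i - z j)"
proof -
  obtain \<tau> where t: "entmax a z = (\<lambda>i. (max 0 ((a - 1) * (z i - \<tau>))) powr (1 / (a - 1)))"
    using entmax_gt1[OF a, of z] by blast
  have key: "entmax a z k powr (a - 1) = (a - 1) * (z k - \<tau>)" if pk: "entmax a z k > 0" for k
  proof -
    have u: "(a - 1) * (z k - \<tau>) > 0"
    proof (rule ccontr)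
      assume "\<not> (a - 1) * (z k - \<tau>) > 0"
      then have "max 0 ((a - 1) * (z k - \<tau>)) = 0" by simp
      then have "entmax a z k = 0" using t by simp
      with pk show False by simp
    qed
    have "entmax a z k powr (a - 1) = (((a - 1) * (z k - \<tau>)) powr (1 / (a - 1))) powr (a - 1)"
      using u t by simp
    also have "\<dots> = (a - 1) * (z k - \<tau>)" using u a by (simp add: powr_powr)
    finally show ?thesis .
  qed
  show ?thesis using key[OF pi] key[OF pj] by (simp add: algebra_simps)
qed

lemma entmax_one_val: "entmax 1 z i = exp (z i) / (\<Sum>j\<in>UNIV. exp (z j))"
  using entmax_one[of z] by (rule fun_cong)

lemma entmax_one_pos: "entmax 1 z i > 0"
proof -
  have "(\<Sum>j\<in>UNIV. exp (z j)) > 0" by (intro sum_pos) auto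
  then show ?thesis unfolding entmax_one_val by simp
qed

lemma entmax_one_ln: "ln (entmax 1 z i) - ln (entmax 1 z j) = z i - z j"
proof -
  have "(\<Sum>j\<in>UNIV. exp (z j)) > 0" by (intro sum_pos) auto
  then show ?thesis unfolding entmax_one_val by (simp add: ln_div)
qed



lemma deriv_zero_eventually:
  fixes G :: "real \<Rightarrow> real"
  assumes "DERIV G x :> L" "eventually (\<lambda>y. G y = c) (nhds x)"
  shows "L = 0"
proof -
  have "DERIV (\<lambda>y. c) x :> L" using assms(1) by (subst (asm) DERIV_cong_ev[OF refl assms(2) refl])
  then show ?thesis using DERIV_const DERIV_unique by blast
qed

lemma alg_final:
  fixes e W c w h p H :: real
  assumes "e > 0" "W > 0" "c = - (H + 1 / e) / W"
  shows "(c * w + h + p / e) / e = (p - w / W) / e^2 + (h - w / W * H) / e"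
  using assms(1,2) unfolding assms(3) by (simp add: field_simps power2_eq_square)

lemma deriv_gt1:
  fixes z :: "'n::finite \<Rightarrow> real" and \<alpha> :: real
  assumes a: "\<alpha> > 1" and D: "\<And>k. ((\<lambda>a. entmax a z k) has_real_derivative D k) (at \<alpha>)"
  defines "p \<equiv> entmax \<alpha> z"
  defines "S \<equiv> {i. p i > 0}"
  defines "W \<equiv> (\<Sum>j\<in>S. p j powr (2 - \<alpha>))"
  defines "H \<equiv> (\<Sum>j\<in>UNIV. - p j * ln (p j))"
  shows "D i = (p i - (if i \<in> S then p i powr (2 - \<alpha>) / W else 0)) / (\<alpha> - 1)^2
            + (- p i * ln (p i) - (if i \<in> S then p i powr (2 - \<alpha>) / W else 0) * H) / (\<alpha> - 1)"
proof -
  let ?P = "\<lambda>a k. entmax a z k"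
  have nhd1: "eventually (\<lambda>y. y > 1) (nhds \<alpha>)" using eventually_nhds_in_open[of "{1<..}" \<alpha>] a by (auto elim: eventually_mono)
  have p0: "p k \<ge> 0" for k unfolding p_def using a by (intro entmax_nonneg) simp
  have psum: "(\<Sum>k\<in>UNIV. p k) = 1" unfolding p_def using a by (intro entmax_sum) simp
  have Dz: "D k = 0" if "p k = 0" for k
  proof (rule DERIV_local_min[OF D[of k], of "\<alpha> - 1"])
    show "0 < \<alpha> - 1" using a by simp
    show "\<forall>y. \<bar>\<alpha> - y\<bar> < \<alpha> - 1 \<longrightarrow> ?P \<alpha> k \<le> ?P y k"
    proof (intro allI impI)
      fix y assume "\<bar>\<alpha> - y\<bar> < \<alpha> - 1"
      then have "y \<ge> 1" by (simp add: abs_if split: if_splits)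
      then show "?P \<alpha> k \<le> ?P y k" using that entmax_nonneg[of y z k] unfolding p_def by simp
    qed
  qed
  have Dsum: "(\<Sum>k\<in>UNIV. D k) = 0"
  proof (rule deriv_zero_eventually)
    show "DERIV (\<lambda>a. \<Sum>k\<in>UNIV. ?P a k) \<alpha> :> (\<Sum>k\<in>UNIV. D k)" by (intro DERIV_sum D)
    show "eventually (\<lambda>a. (\<Sum>k\<in>UNIV. ?P a k) = 1) (nhds \<alpha>)"
      using nhd1 by eventually_elim (simp add: entmax_sum)
  qed
  have evpos: "eventually (\<lambda>a. ?P a k > 0) (nhds \<alpha>)" if "p k > 0" for k
  proof -
    have "isCont (\<lambda>a. ?P a k) \<alpha>" using D[of k] by (rule DERIV_isCont)
    then have "((\<lambda>a. ?P a k) \<longlongrightarrow> p k) (nhds \<alpha>)" unfolding p_def isCont_def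
      by (rule tendsto_at_iff_tendsto_nhds[THEN iffD1])
    then show ?thesis using that by (rule order_tendstoD)
  qed
  \<comment> \<open>differentiated stationarity\<close>
  define K where "K k = p k powr (\<alpha> - 1) * (ln (p k) + D k * (\<alpha> - 1) / p k)" for k
  have Kdiff: "K i' - K j - (z i' - z j) = 0" if "i' \<in> S" "j \<in> S" for i' j
  proof (rule deriv_zero_eventually)
    have pi: "p i' > 0" and pj: "p j > 0" using that S_def by auto
    have d1: "((\<lambda>a. a - 1) has_real_derivative 1) (at \<alpha>)" by (auto intro!: derivative_eq_intros)
    have di: "DERIV (\<lambda>a. ?P a i' powr (a - 1)) \<alpha> :> K i'"
      using has_real_derivative_powr'[OF D[of i'] d1] pi
      unfolding K_def p_def by (simp add: algebra_simps)
    have dj: "DERIV (\<lambda>a. ?P a j powr (a - 1)) \<alpha> :> K j"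
      using has_real_derivative_powr'[OF D[of j] d1] pj
      unfolding K_def p_def by (simp add: algebra_simps)
    show "DERIV (\<lambda>a. ?P a i' powr (a - 1) - ?P a j powr (a - 1) - (a - 1) * (z i' - z j)) \<alpha> :> K i' - K j - (z i' - z j)"
      using di dj by (auto intro!: derivative_eq_intros)
    show "eventually (\<lambda>a. ?P a i' powr (a - 1) - ?P a j powr (a - 1) - (a - 1) * (z i' - z j) = 0) (nhds \<alpha>)"
      using nhd1 evpos[OF pi] evpos[OF pj] by eventually_elim (simp add: entmax_stat)
  qed
  have stat: "p i' powr (\<alpha> - 1) - p j powr (\<alpha> - 1) = (\<alpha> - 1) * (z i' - z j)" if "i' \<in> S" "j \<in> S" for i' j
    using that entmax_stat[OF a] unfolding S_def p_def by auto
  define C where "C k = K k - p k powr (\<alpha> - 1) / (\<alpha> - 1)" for k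
  have Ceq: "C i' = C j" if "i' \<in> S" "j \<in> S" for i' j
  proof -
    have "z i' - z j = (p i' powr (\<alpha> - 1) - p j powr (\<alpha> - 1)) / (\<alpha> - 1)" using stat[OF that] a by simp
    then show ?thesis using Kdiff[OF that] unfolding C_def by (simp add: diff_divide_distrib)
  qed
  have notS: "p k = 0" if "k \<notin> S" for k using that p0[of k] unfolding S_def by simp
  have fS: "finite S" by simp
  have SD: "(\<Sum>k\<in>UNIV. D k) = (\<Sum>k\<in>S. D k)" by (rule sum.mono_neutral_right) (auto intro: Dz notS)
  have SH: "H = (\<Sum>k\<in>S. - p k * ln (p k))" unfolding H_def by (rule sum.mono_neutral_right) (auto simp: notS)
  have Sp: "(\<Sum>k\<in>S. p k) = 1" using psum by (subst (asm) sum.mono_neutral_right[of UNIV S]) (auto simp: notS)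
  have Sne: "S \<noteq> {}" using Sp by auto
  then obtain i0 where i0: "i0 \<in> S" by auto
  have Wp: "W > 0" unfolding W_def using Sne S_def by (intro sum_pos) auto
  define c where "c = C i0"
  have Dform: "D k * (\<alpha> - 1) = c * p k powr (2 - \<alpha>) + (- p k * ln (p k)) + p k / (\<alpha> - 1)" if kS: "k \<in> S" for k
  proof -
    have pk: "p k > 0" using kS S_def by simp
    have e1: "p k powr (\<alpha> - 1) * p k powr (2 - \<alpha>) = p k" using pk by (simp add: powr_add[symmetric])
    have "c = C k" using Ceq[OF i0 kS] c_def by simp
    then have "c * p k powr (2 - \<alpha>) = (p k powr (\<alpha> - 1) * p k powr (2 - \<alpha>)) * (ln (p k) + D k * (\<alpha> - 1) / p k)
          - (p k powr (\<alpha> - 1) * p k powr (2 - \<alpha>)) / (\<alpha> - 1)"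
      unfolding C_def K_def by (simp only: left_diff_distrib) (simp add: algebra_simps)
    also have "\<dots> = p k * ln (p k) + D k * (\<alpha> - 1) - p k / (\<alpha> - 1)"
      unfolding e1 using pk by (simp add: field_simps)
    finally show ?thesis by simp
  qed
  have "0 = (\<Sum>k\<in>S. D k * (\<alpha> - 1))" using Dsum SD by (simp add: sum_distrib_right[symmetric])
  also have "\<dots> = (\<Sum>k\<in>S. c * p k powr (2 - \<alpha>) + (- p k * ln (p k)) + p k / (\<alpha> - 1))"
    by (rule sum.cong) (auto simp: Dform)
  also have "\<dots> = (\<Sum>k\<in>S. c * p k powr (2 - \<alpha>)) + (\<Sum>k\<in>S. - p k * ln (p k)) + (\<Sum>k\<in>S. p k / (\<alpha> - 1))"
    by (simp only: sum.distrib)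
  also have "\<dots> = c * W + H + 1 / (\<alpha> - 1)"
    unfolding W_def SH by (simp add: sum_distrib_left sum_divide_distrib[symmetric] Sp)
  finally have ceq: "c = - (H + 1 / (\<alpha> - 1)) / W" using Wp by (simp add: field_simps)
  show ?thesis
  proof (cases "i \<in> S")
    case True
    have "D i = (c * p i powr (2 - \<alpha>) + (- p i * ln (p i)) + p i / (\<alpha> - 1)) / (\<alpha> - 1)"
      using Dform[OF True] a by (subst eq_divide_eq) simp
    moreover have "(c * p i powr (2 - \<alpha>) + (- p i * ln (p i)) + p i / (\<alpha> - 1)) / (\<alpha> - 1)
       = (p i - p i powr (2 - \<alpha>) / W) / (\<alpha> - 1)^2 + ((- p i * ln (p i)) - p i powr (2 - \<alpha>) / W * H) / (\<alpha> - 1)"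
      by (rule alg_final) (use a Wp ceq in auto)
    ultimately show ?thesis using True by simp
  next
    case False
    then show ?thesis using notS[OF False] Dz[OF notS[OF False]] by simp
  qed
qed


definition Ef :: "real \<Rightarrow> real" where
  "Ef x = (if x = 0 then 1/2 else (exp x - 1 - x) / x^2)"

lemma Ef_exp: "exp x = 1 + x + x^2 * Ef x"
  by (cases "x = 0") (simp_all add: Ef_def field_simps)

lemma Ef_cont: "isCont Ef 0"
proof -
  have "((\<lambda>x::real. (exp x - 1 - x) / x^2) \<longlongrightarrow> 1/2) (at 0)" by real_asymp
  moreover have "eventually (\<lambda>x. (exp x - 1 - x) / x^2 = Ef x) (at (0::real))"
    using eventually_at_filter[of "\<lambda>x. (exp x - 1 - x) / x^2 = Ef x" 0 UNIV]
    by (auto simp: Ef_def)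
  ultimately have "(Ef \<longlongrightarrow> 1/2) (at 0)" by (rule Lim_transform_eventually)
  then show ?thesis unfolding isCont_def by (simp add: Ef_def)
qed

lemma alg2:
  fixes \<epsilon> li lj Li Lj Ei Ej :: real
  assumes e: "\<epsilon> > 0"
    and h: "(1 + \<epsilon> * li + (\<epsilon> * li)^2 * Ei) - (1 + \<epsilon> * lj + (\<epsilon> * lj)^2 * Ej) = \<epsilon> * (Li - Lj)"
  shows "(li - Li) / \<epsilon> - (lj - Lj) / \<epsilon> = lj^2 * Ej - li^2 * Ei"
proof -
  have r: "(1 + \<epsilon> * li + (\<epsilon> * li)^2 * Ei) - (1 + \<epsilon> * lj + (\<epsilon> * lj)^2 * Ej) - \<epsilon> * (Li - Lj)
     = \<epsilon> * ((li - lj - (Li - Lj)) + \<epsilon> * (li^2 * Ei - lj^2 * Ej))"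
    by (simp add: algebra_simps power2_eq_square)
  have "\<epsilon> * ((li - lj - (Li - Lj)) + \<epsilon> * (li^2 * Ei - lj^2 * Ej)) = 0"
    using h r by simp
  then have q: "(li - lj - (Li - Lj)) = - \<epsilon> * (li^2 * Ei - lj^2 * Ej)" using e by simp
  have "(li - Li) / \<epsilon> - (lj - Lj) / \<epsilon> = (li - lj - (Li - Lj)) / \<epsilon>"
    by (simp add: diff_divide_distrib[symmetric] algebra_simps)
  also have "\<dots> = - (li^2 * Ei - lj^2 * Ej)" unfolding q using e by simp
  finally show ?thesis by simp
qed

lemma deriv_one:
  fixes z :: "'n::finite \<Rightarrow> real"
  assumes D0: "\<And>k. ((\<lambda>a. entmax a z k) has_real_derivative D k) (at 1 within {1..})"
  defines "p \<equiv> entmax 1 z"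
  shows "D i = ((- p i * ln (p i)) * ln (p i) - p i * (\<Sum>j\<in>UNIV. (- p j * ln (p j)) * ln (p j))) / 2"
proof -
  let ?P = "\<lambda>a k. entmax a z k"
  let ?F = "at_right (1::real)"
  have D: "((\<lambda>a. ?P a k) has_real_derivative D k) ?F" for k
    by (rule DERIV_subset[OF D0[of k]]) auto
  have pp: "p k > 0" for k unfolding p_def by (rule entmax_one_pos)
  have cont: "((\<lambda>a. ?P a k) \<longlongrightarrow> p k) ?F" for k
    using DERIV_continuous[OF D[of k]] unfolding continuous_within p_def .
  have ev: "eventually (\<lambda>a. 1 < a \<and> (\<forall>k. ?P a k > 0)) ?F"
  proof -
    have "eventually (\<lambda>a. \<forall>k. ?P a k > 0) ?F"
      by (rule eventually_all_finite) (use order_tendstoD(1)[OF cont pp] in blast)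
    then show ?thesis using eventually_at_right_less[of 1] by eventually_elim auto
  qed
  have qln: "((\<lambda>a. (ln (?P a k) - ln (p k)) / (a - 1)) \<longlongrightarrow> D k / p k) ?F" for k
  proof -
    have "((\<lambda>a. ln (?P a k)) has_real_derivative 1 / p k * D k) ?F"
    proof -
      have h: "DERIV ln ((\<lambda>a. ?P a k) 1) :> 1 / p k" using DERIV_ln_divide[OF pp[of k]] unfolding p_def by simp
      show ?thesis using DERIV_chain2[OF h D[of k]] .
    qed
    then show ?thesis unfolding has_field_derivative_iff p_def by simp
  qed
  have lnlim: "((\<lambda>a. ln (?P a k)) \<longlongrightarrow> ln (p k)) ?F" for k
    using tendsto_ln[OF cont[of k]] pp[of k] by simp
  have epslim: "((\<lambda>a. a - 1) \<longlongrightarrow> 0) ?F"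
    using tendsto_diff[OF tendsto_ident_at[of 1 "{1<..}"] tendsto_const[of 1]] by simp
  have pair: "D i' / p i' - D j / p j = ln (p j)^2 / 2 - ln (p i')^2 / 2" for i' j
  proof (rule tendsto_unique[where F="?F"])
    show "?F \<noteq> bot" by simp
    show "((\<lambda>a. (ln (?P a i') - ln (p i')) / (a - 1) - (ln (?P a j) - ln (p j)) / (a - 1)) \<longlongrightarrow> D i' / p i' - D j / p j) ?F"
      by (intro tendsto_diff qln)
    have Ek: "((\<lambda>a. Ef ((a - 1) * ln (?P a k))) \<longlongrightarrow> Ef 0) ?F" for k
    proof -
      have "((\<lambda>a. (a - 1) * ln (?P a k)) \<longlongrightarrow> 0) ?F" using tendsto_mult[OF epslim lnlim[of k]] by simp
      from isCont_tendsto_compose[OF Ef_cont this] show ?thesis .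
    qed
    have "((\<lambda>a. ln (?P a j)^2 * Ef ((a - 1) * ln (?P a j)) - ln (?P a i')^2 * Ef ((a - 1) * ln (?P a i')))
        \<longlongrightarrow> ln (p j)^2 * Ef 0 - ln (p i')^2 * Ef 0) ?F"
      by (intro tendsto_intros lnlim Ek)
    then have "((\<lambda>a. ln (?P a j)^2 * Ef ((a - 1) * ln (?P a j)) - ln (?P a i')^2 * Ef ((a - 1) * ln (?P a i')))
        \<longlongrightarrow> ln (p j)^2 / 2 - ln (p i')^2 / 2) ?F" by (simp add: Ef_def)
    moreover have "eventually (\<lambda>a. ln (?P a j)^2 * Ef ((a - 1) * ln (?P a j)) - ln (?P a i')^2 * Ef ((a - 1) * ln (?P a i'))
        = (ln (?P a i') - ln (p i')) / (a - 1) - (ln (?P a j) - ln (p j)) / (a - 1)) ?F"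
      using ev
    proof eventually_elim
      case (elim a)
      then have a1: "a - 1 > 0" and pi: "?P a i' > 0" and pj: "?P a j > 0" by auto
      have st: "?P a i' powr (a - 1) - ?P a j powr (a - 1) = (a - 1) * (z i' - z j)"
        using entmax_stat[of a z i' j] elim by auto
      have zz: "z i' - z j = ln (p i') - ln (p j)" unfolding p_def using entmax_one_ln[of z i' j] by simp
      have pw: "?P a k powr (a - 1) = 1 + (a - 1) * ln (?P a k) + ((a - 1) * ln (?P a k))^2 * Ef ((a - 1) * ln (?P a k))"
        if "?P a k > 0" for k
        using that by (simp add: powr_def Ef_exp[symmetric])
      show ?case
        by (rule alg2[OF a1, symmetric]) (use st pw[OF pi] pw[OF pj] zz in simp)
    qed
    ultimately show "((\<lambda>a. (ln (?P a i') - ln (p i')) / (a - 1) - (ln (?P a j) - ln (p j)) / (a - 1)) \<longlongrightarrow> ln (p j)^2 / 2 - ln (p i')^2 / 2) ?F"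
      by (rule Lim_transform_eventually)
  qed
  have Dsum: "(\<Sum>k\<in>UNIV. D k) = 0"
  proof (rule tendsto_unique[where F="?F"])
    show "?F \<noteq> bot" by simp
    have "((\<lambda>a. \<Sum>k\<in>UNIV. (?P a k - p k) / (a - 1)) \<longlongrightarrow> (\<Sum>k\<in>UNIV. D k)) ?F"
      by (intro tendsto_sum) (use D in \<open>auto simp: has_field_derivative_iff p_def\<close>)
    then show "((\<lambda>a. \<Sum>k\<in>UNIV. (?P a k - p k) / (a - 1)) \<longlongrightarrow> (\<Sum>k\<in>UNIV. D k)) ?F" .
    have "eventually (\<lambda>a. 0 = (\<Sum>k\<in>UNIV. (?P a k - p k) / (a - 1))) ?F"
      using ev
    proof eventually_elim
      case (elim a)
      have "(\<Sum>k\<in>UNIV. (?P a k - p k) / (a - 1)) = ((\<Sum>k\<in>UNIV. ?P a k) - (\<Sum>k\<in>UNIV. p k)) / (a - 1)"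
        by (simp add: sum_divide_distrib[symmetric] sum_subtractf)
      also have "\<dots> = 0" using elim unfolding p_def by (simp add: entmax_sum)
      finally show ?case by simp
    qed
    then show "((\<lambda>a. \<Sum>k\<in>UNIV. (?P a k - p k) / (a - 1)) \<longlongrightarrow> 0) ?F"
      by (rule Lim_transform_eventually[OF tendsto_const])
  qed
  define c where "c = D i / p i + ln (p i)^2 / 2"
  have Dj: "D j = p j * (c - ln (p j)^2 / 2)" for j
  proof -
    have "D j / p j = c - ln (p j)^2 / 2" using pair[of i j] unfolding c_def by simp
    then show ?thesis using pp[of j] by (simp add: field_simps)
  qed
  have psum: "(\<Sum>k\<in>UNIV. p k) = 1" unfolding p_def by (rule entmax_sum) simp
  define B where "B = (\<Sum>j\<in>UNIV. p j * ln (p j)^2)"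
  have "0 = (\<Sum>j\<in>UNIV. p j * c - p j * ln (p j)^2 / 2)" using Dsum Dj by (simp add: algebra_simps)
  also have "\<dots> = c - B / 2" unfolding B_def
    by (simp add: sum_subtractf sum_distrib_right[symmetric] sum_divide_distrib[symmetric] psum)
  finally have cB: "c = B / 2" by simp
  have rhs: "(\<Sum>j\<in>UNIV. (- p j * ln (p j)) * ln (p j)) = - B"
    unfolding B_def by (simp add: sum_negf[symmetric] power2_eq_square algebra_simps)
  show ?thesis unfolding rhs using Dj[of i] cB by (simp add: algebra_simps power2_eq_square)
qed



theorem proposition1:
  fixes z :: "'n::finite \<Rightarrow> real" and \<alpha> :: real
  assumes "\<alpha> \<ge> 1"
    and "\<forall>i. (\<lambda>a. entmax a z i) differentiable (at \<alpha> within {1..})"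
  shows "let p = entmax \<alpha> z;
             S = {i. p i > 0};
             pt = (\<lambda>i. if i \<in> S then p i powr (2 - \<alpha>) / (\<Sum>j\<in>S. p j powr (2 - \<alpha>)) else 0);
             h = (\<lambda>i. - p i * ln (p i));
             g = (\<lambda>i. if \<alpha> > 1
                     then (p i - pt i) / (\<alpha> - 1)^2 + (h i - pt i * (\<Sum>j\<in>UNIV. h j)) / (\<alpha> - 1)
                     else (h i * ln (p i) - p i * (\<Sum>j\<in>UNIV. h j * ln (p j))) / 2)
         in \<forall>i. ((\<lambda>a. entmax a z i) has_real_derivative g i) (at \<alpha> within {1..})"
proof -
  have "\<forall>k. \<exists>Dk. ((\<lambda>a. entmax a z k) has_real_derivative Dk) (at \<alpha> within {1..})"
    using assms(2) unfolding real_differentiable_def by blast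
  then obtain D where D: "\<And>k. ((\<lambda>a. entmax a z k) has_real_derivative D k) (at \<alpha> within {1..})"
    using choice[of "\<lambda>k Dk. ((\<lambda>a. entmax a z k) has_real_derivative Dk) (at \<alpha> within {1..})"] by blast
  show ?thesis
  proof (cases "\<alpha> > 1")
    case True
    have Dat: "((\<lambda>a. entmax a z k) has_real_derivative D k) (at \<alpha>)" for k
    proof -
      have "((\<lambda>a. entmax a z k) has_real_derivative D k) (at \<alpha> within {1<..})"
        by (rule DERIV_subset[OF D]) auto
      moreover have "at \<alpha> within {1<..} = at \<alpha>" using True by (intro at_within_open) auto
      ultimately show ?thesis by simp
    qed
    show ?thesis unfolding Let_def if_P[OF True]
      apply (intro allI)
      subgoal for i
        using D[of i] apply (unfold deriv_gt1[OF True Dat, of i])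
        apply assumption
        done
      done
  next
    case False
    then have a1: "\<alpha> = 1" using assms(1) by simp
    have D1: "((\<lambda>a. entmax a z k) has_real_derivative D k) (at 1 within {1..})" for k
      using D[of k] unfolding a1 .
    show ?thesis unfolding Let_def a1 if_not_P[OF less_irrefl]
      apply (intro allI)
      subgoal for i
        using D1[of i] apply (unfold deriv_one[OF D1, of i])
        apply assumption
        done
      done
  qed
qed

end
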